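(* Let $\widehat{\mathcal T}^{bin}_{pl}$ be the completion (formal infinite sums, graded by number of internal vertices) of the linear span over a field $k$ of characteristic zero of planar binary trees, with the associative product $*$ described in the context, and let $\tau_l^{(n)}$ be the left comb with $n$ internal vertices. Put $X:=|+\sum_{n\ge1}\tau_l^{(n)}$. Then $$\log^*(X)=\sum_{n>0}\frac1n\sum_{t\ \text{planar binary},\ |t|=n}\frac{(-1)^{d(t)}}{\binom{n-1}{d(t)}}\,t,$$ where $|t|$ is the number of internal vertices of $t$ and $d(t)$ its number of descents.
   Context: A planar binary tree is a finite planar rooted tree in which every internal vertex has exactly two incoming edges (a left one and a right one) and one outgoing edge; leaves are the external incoming edges, and there is one root edge. The tree with no internal vertex is the single edge $|$. For planar binary trees $t_1,t_2$, $t_1\vee t_2$ is the tree obtained by grafting $t_1$ and $t_2$ as left and right subtrees on a new root vertex; every tree $t\ne|$ decomposes uniquely as $t=t_1\vee t_2$. Extend $\vee$ bilinearly. The product $*$ is the bilinear product defined recursively by $|*t=t*|=t$ and, for $s=s_1\vee s_2$, $t=t_1\vee t_2$, $s*t=s_1\vee(s_2*t)+(s*t_1)\vee t_2$; it is associative with unit $|$ and additive in the number of internal vertices, so it extends to the completion. Left combs: $\tau_l^{(0)}=|$, $\tau_l^{(n+1)}=\tau_l^{(n)}\vee|$. For $L$ with no degree-$0$ component, $\log^*(|+L):=\sum_{k\ge1}\frac{(-1)^{k+1}}{k}L^{*k}$. A leaf of a planar binary tree is a descent if it is not the leftmost leaf and it points to the left, i.e. it is the left incoming edge of its internal vertex.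 *)

theory Defs
  imports Main
begin

text \<open>Planar binary trees: Leaf is the single edge |, Node t1 t2 is t1 \<or> t2.\<close>
datatype ptree = Leaf | Node ptree ptree

fun isize :: "ptree \<Rightarrow> nat" where
  "isize Leaf = 0"
| "isize (Node l r) = Suc (isize l + isize r)"

text \<open>Number of descents: non-leftmost leaves that are left incoming edges.\<close>
fun descents :: "ptree \<Rightarrow> nat" where
  "descents Leaf = 0"
| "descents (Node l r) = descents l + descents r + (if r = Leaf then 0 else 1)"

fun lcomb :: "nat \<Rightarrow> ptree" where
  "lcomb 0 = Leaf"
| "lcomb (Suc n) = Node (lcomb n) Leaf"

text \<open>tcoeff s t r = coefficient of the tree r in the product s * t
  (s*t = s1 \<or> (s2*t) + (s*t1) \<or> t2, with | as unit).\<close>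
function tcoeff :: "ptree \<Rightarrow> ptree \<Rightarrow> ptree \<Rightarrow> nat" where
  "tcoeff Leaf t r = (if r = t then 1 else 0)"
| "tcoeff (Node s1 s2) Leaf r = (if r = Node s1 s2 then 1 else 0)"
| "tcoeff (Node s1 s2) (Node t1 t2) r =
     (case r of Leaf \<Rightarrow> 0
      | Node r1 r2 \<Rightarrow>
          (if r1 = s1 then tcoeff s2 (Node t1 t2) r2 else 0)
        + (if r2 = t2 then tcoeff (Node s1 s2) t1 r1 else 0))"
  by pat_completeness auto
termination
  by (relation "measure (\<lambda>(s, t, r). size s + size t)") auto

text \<open>Elements of the completion: formal (possibly infinite) sums of trees,
  represented by their coefficient functions. Product on the completion
  (each graded piece is finite, so the coefficients are finite sums).\<close>
definition sprod :: "(ptree \<Rightarrow> 'a::comm_ring_1) \<Rightarrow> (ptree \<Rightarrow> 'a) \<Rightarrow> ptree \<Rightarrow> 'a" where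
  "sprod f g r = (\<Sum>(s, t) \<in> {(s, t). isize s + isize t = isize r}.
                     f s * g t * of_nat (tcoeff s t r))"

definition sunit :: "ptree \<Rightarrow> 'a::comm_ring_1" where
  "sunit t = (if t = Leaf then 1 else 0)"

fun spow :: "(ptree \<Rightarrow> 'a::comm_ring_1) \<Rightarrow> nat \<Rightarrow> ptree \<Rightarrow> 'a" where
  "spow f 0 = sunit"
| "spow f (Suc k) = sprod f (spow f k)"

text \<open>Since L^{*k} is concentrated in degrees \<ge> k, the coefficient of r only
  receives contributions from k \<le> isize r; this truncation computes the
  infinite sum in the completion exactly.\<close>
definition slog :: "(ptree \<Rightarrow> 'a::field_char_0) \<Rightarrow> ptree \<Rightarrow> 'a" where
  "slog X r = (let L = (\<lambda>t. X t - sunit t) in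
     (\<Sum>k \<in> {1..isize r}. (-1) ^ (k + 1) / of_nat k * spow L k r))"

definition Xcombs :: "ptree \<Rightarrow> 'a::comm_ring_1" where
  "Xcombs t = (if \<exists>n. t = lcomb n then 1 else 0)"

end

theory Submission
  imports Defs
begin

lemma tcoeff_size: "tcoeff s t r \<noteq> 0 \<Longrightarrow> isize r = isize s + isize t"
proof (induction s t r rule: tcoeff.induct)
  case (1 t r) then show ?case by (simp split: if_splits)
next
  case (2 s1 s2 r) then show ?case by (simp split: if_splits)
next
  case (3 s1 s2 t1 t2 r)
  show ?case
  proof (cases r)
    case Leaf then show ?thesis using 3 by simp
  next
    case (Node r1 r2)
    have h: "(if r1 = s1 then tcoeff s2 (Node t1 t2) r2 else 0)
        + (if r2 = t2 then tcoeff (Node s1 s2) t1 r1 else 0) \<noteq> 0"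
      using 3(3) Node by simp
    show ?thesis
    proof (cases "r1 = s1 \<and> tcoeff s2 (Node t1 t2) r2 \<noteq> 0")
      case True
      then have "isize r2 = isize s2 + isize (Node t1 t2)" using 3(1) Node by blast
      then show ?thesis using Node True by simp
    next
      case False
      with h have "r2 = t2" "tcoeff (Node s1 s2) t1 r1 \<noteq> 0" by (auto split: if_splits)
      then have "isize r1 = isize (Node s1 s2) + isize t1" using 3(2) Node by blast
      then show ?thesis using Node \<open>r2 = t2\<close> by simp
    qed
  qed
qed

lemma finite_B: "finite {t. isize t \<le> n}"
proof (induction n)
  case 0
  have "{t. isize t \<le> 0} = {Leaf}" by (auto elim: isize.elims)
  then show ?case by simp
next
  case (Suc n)
  have "{t. isize t \<le> Suc n} \<subseteq> insert Leaf ((\<lambda>(a,b). Node a b) ` ({t. isize t \<le> n} \<times> {t. isize t \<le> n}))"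
  proof
    fix t assume "t \<in> {t. isize t \<le> Suc n}"
    then show "t \<in> insert Leaf ((\<lambda>(a,b). Node a b) ` ({t. isize t \<le> n} \<times> {t. isize t \<le> n}))"
      by (cases t) auto
  qed
  moreover have "finite (insert Leaf ((\<lambda>(a,b). Node a b) ` ({t. isize t \<le> n} \<times> {t. isize t \<le> n})))" using Suc by simp
  ultimately show ?case by (rule finite_subset)
qed

lemma lcomb_desc: "(\<exists>n. t = lcomb n) \<longleftrightarrow> descents t = 0"
proof
  assume "\<exists>n. t = lcomb n" then obtain n where "t = lcomb n" by blast
  then show "descents t = 0" by (induction n arbitrary: t) auto
next
  assume "descents t = 0" then show "\<exists>n. t = lcomb n"
  proof (induction t)
    case Leaf then show ?case by (metis lcomb.simps(1))
  next
    case (Node l r)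
    then obtain n where "l = lcomb n" "r = Leaf" by (auto split: if_splits)
    then show ?case by (metis lcomb.simps(2))
  qed
qed

lemma isize_lcomb[simp]: "isize (lcomb n) = n" by (induction n) auto

lemma lcomb_inj: "lcomb a = lcomb b \<Longrightarrow> a = b"
  by (metis isize_lcomb)

lemma desc_le: "descents t + (if t = Leaf then 0 else 1) \<le> isize t"
  by (induction t) (auto split: if_splits)

fun tl_len :: "ptree \<Rightarrow> nat" where
  "tl_len Leaf = 0"
| "tl_len (Node r1 r2) = (if descents r1 = 0 then isize r1 + (if r2 = Leaf then 1 else 0) else tl_len r1)"

lemma tl_comb: "descents r = 0 \<Longrightarrow> tl_len r = isize r"
  by (induction r) (auto split: if_splits)

lemma tl_noncomb: "descents r \<noteq> 0 \<Longrightarrow> descents r + tl_len r + 1 \<le> isize r"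
proof (induction r)
  case Leaf then show ?case by simp
next
  case (Node r1 r2)
  show ?case
  proof (cases "descents r1 = 0")
    case True
    with Node.prems have "r2 \<noteq> Leaf" by auto
    with desc_le[of r2] True show ?thesis by auto
  next
    case False
    with Node.IH(1) have "descents r1 + tl_len r1 + 1 \<le> isize r1" by blast
    with desc_le[of r2] False show ?thesis by (auto split: if_splits)
  qed
qed


definition Lc :: "ptree \<Rightarrow> 'a::comm_ring_1" where
  "Lc t = (if descents t = 0 \<and> t \<noteq> Leaf then 1 else 0)"

abbreviation B :: "nat \<Rightarrow> ptree set" where "B n \<equiv> {t. isize t \<le> n}"

lemma sprod_B:
  assumes "isize r \<le> N"
  shows "sprod f g r = (\<Sum>s\<in>B N. \<Sum>t\<in>B N. f s * g t * of_nat (tcoeff s t r))"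
proof -
  have "sprod f g r = (\<Sum>(s, t) \<in> B N \<times> B N. f s * g t * of_nat (tcoeff s t r))"
    unfolding sprod_def
  proof (rule sum.mono_neutral_left)
    show "finite (B N \<times> B N)" using finite_B by blast
    show "{(s, t). isize s + isize t = isize r} \<subseteq> B N \<times> B N" using assms by auto
    show "\<forall>i\<in>B N \<times> B N - {(s, t). isize s + isize t = isize r}.
       (case i of (s, t) \<Rightarrow> f s * g t * of_nat (tcoeff s t r)) = 0"
    proof
      fix i assume i: "i \<in> B N \<times> B N - {(s, t). isize s + isize t = isize r}"
      obtain s t where st: "i = (s, t)" by fastforce
      with i have "tcoeff s t r = 0" using tcoeff_size by fastforce
      then show "(case i of (s, t) \<Rightarrow> f s * g t * of_nat (tcoeff s t r)) = 0" using st by simp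
    qed
  qed
  also have "\<dots> = (\<Sum>s\<in>B N. \<Sum>t\<in>B N. f s * g t * of_nat (tcoeff s t r))"
    by (rule sum.cartesian_product[symmetric])
  finally show ?thesis .
qed

definition Q :: "(ptree \<Rightarrow> 'a::comm_ring_1) \<Rightarrow> nat \<Rightarrow> ptree \<Rightarrow> nat \<Rightarrow> 'a" where
  "Q g a r N = (\<Sum>t\<in>B N. g t * of_nat (tcoeff (lcomb a) t r))"

lemma sprod_Q:
  fixes g :: "ptree \<Rightarrow> 'a::comm_ring_1"
  assumes "isize r \<le> N"
  shows "sprod Lc g r = (\<Sum>a\<in>{1..N}. Q g a r N)"
proof -
  have "sprod Lc g r = (\<Sum>s\<in>B N. Lc s * (\<Sum>t\<in>B N. g t * of_nat (tcoeff s t r)))"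
    unfolding sprod_B[OF assms] by (simp add: sum_distrib_left mult.assoc)
  also have "\<dots> = (\<Sum>s\<in>lcomb ` {1..N}. Lc s * (\<Sum>t\<in>B N. g t * of_nat (tcoeff s t r)))"
  proof (rule sum.mono_neutral_right)
    show "finite (B N)" by (rule finite_B)
    show "lcomb ` {1..N} \<subseteq> B N" by auto
    show "\<forall>i\<in>B N - lcomb ` {1..N}. Lc i * (\<Sum>t\<in>B N. g t * of_nat (tcoeff i t r)) = 0"
    proof
      fix s assume s: "s \<in> B N - lcomb ` {1..N}"
      have "(Lc s :: 'a) = 0"
      proof (rule ccontr)
        assume "Lc s \<noteq> 0"
        then have "descents s = 0" "s \<noteq> Leaf" unfolding Lc_def by (auto split: if_splits)
        then obtain n where n: "s = lcomb n" using lcomb_desc by blast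
        with \<open>s \<noteq> Leaf\<close> have "n \<ge> 1" by (cases n) auto
        moreover have "n \<le> N" using s n by auto
        ultimately show False using s n by auto
      qed
      then show "Lc s * (\<Sum>t\<in>B N. g t * of_nat (tcoeff s t r)) = 0" by simp
    qed
  qed
  also have "\<dots> = (\<Sum>a\<in>{1..N}. Lc (lcomb a) * (\<Sum>t\<in>B N. g t * of_nat (tcoeff (lcomb a) t r)))"
    by (rule sum.reindex_cong[where l = lcomb]) (auto simp: inj_on_def intro: lcomb_inj)
  also have "\<dots> = (\<Sum>a\<in>{1..N}. Q g a r N)"
  proof (rule sum.cong)
    fix a assume "a \<in> {1..N}"
    have "descents (lcomb a) = 0" using lcomb_desc by blast
    moreover have "lcomb a \<noteq> Leaf" using \<open>a \<in> {1..N}\<close> by (cases a) auto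
    ultimately have "(Lc (lcomb a) :: 'a) = 1" unfolding Lc_def by simp
    then show "Lc (lcomb a) * (\<Sum>t\<in>B N. g t * of_nat (tcoeff (lcomb a) t r)) = Q g a r N"
      by (simp add: Q_def)
  qed simp
  finally show ?thesis .
qed

lemma tcoeff_lcomb:
  "tcoeff (lcomb (Suc b)) t (Node r1 r2) = (if r1 = lcomb b \<and> r2 = t then 1 else 0)
     + (case t of Leaf \<Rightarrow> 0 | Node t1 t2 \<Rightarrow> if r2 = t2 then tcoeff (lcomb (Suc b)) t1 r1 else 0)"
  by (cases t) auto

lemma Q_node:
  assumes "isize (Node r1 r2) \<le> N"
  shows "Q g (Suc b) (Node r1 r2) N = (if r1 = lcomb b then g r2 else 0)
           + Q (\<lambda>u. g (Node u r2)) (Suc b) r1 N"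
proof -
  let ?c = "\<lambda>t1. tcoeff (lcomb (Suc b)) t1 r1"
  have fin: "finite (B N)" by (rule finite_B)
  have "Q g (Suc b) (Node r1 r2) N =
      (\<Sum>t\<in>B N. g t * of_nat (if r1 = lcomb b \<and> r2 = t then 1 else 0))
    + (\<Sum>t\<in>B N. g t * of_nat (case t of Leaf \<Rightarrow> 0 | Node t1 t2 \<Rightarrow> if r2 = t2 then ?c t1 else 0))"
    unfolding Q_def tcoeff_lcomb by (simp add: distrib_left sum.distrib)
  also have "(\<Sum>t\<in>B N. g t * of_nat (if r1 = lcomb b \<and> r2 = t then 1 else 0)) = (if r1 = lcomb b then g r2 else 0)"
  proof -
    have "r2 \<in> B N" using assms by auto
    have "(\<Sum>t\<in>B N. g t * of_nat (if r1 = lcomb b \<and> r2 = t then 1 else 0))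
       = (\<Sum>t\<in>B N. if t = r2 then (if r1 = lcomb b then g r2 else 0) else 0)"
      by (rule sum.cong) auto
    then show ?thesis using fin \<open>r2 \<in> B N\<close> by simp
  qed
  also have "(\<Sum>t\<in>B N. g t * of_nat (case t of Leaf \<Rightarrow> 0 | Node t1 t2 \<Rightarrow> if r2 = t2 then ?c t1 else 0))
      = (\<Sum>t\<in>(\<lambda>t1. Node t1 r2) ` B (isize r1). g t * of_nat (case t of Leaf \<Rightarrow> 0 | Node t1 t2 \<Rightarrow> if r2 = t2 then ?c t1 else 0))"
  proof (rule sum.mono_neutral_right[OF fin])
    show "(\<lambda>t1. Node t1 r2) ` B (isize r1) \<subseteq> B N" using assms by auto
    show "\<forall>i\<in>B N - (\<lambda>t1. Node t1 r2) ` B (isize r1).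
       g i * of_nat (case i of Leaf \<Rightarrow> 0 | Node t1 t2 \<Rightarrow> if r2 = t2 then ?c t1 else 0) = 0"
    proof
      fix t assume t: "t \<in> B N - (\<lambda>t1. Node t1 r2) ` B (isize r1)"
      show "g t * of_nat (case t of Leaf \<Rightarrow> 0 | Node t1 t2 \<Rightarrow> if r2 = t2 then ?c t1 else 0) = 0"
      proof (cases t)
        case (Node t1 t2)
        show ?thesis
        proof (cases "t2 = r2")
          case True
          with t Node have "isize t1 > isize r1" by auto
          then have "?c t1 = 0" using tcoeff_size by fastforce
          then show ?thesis using Node by simp
        qed (use Node in simp)
      qed simp
    qed
  qed
  also have "\<dots> = (\<Sum>t1\<in>B (isize r1). g (Node t1 r2) * of_nat (?c t1))"
    by (subst sum.reindex) (auto simp: inj_on_def)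
  also have "\<dots> = Q (\<lambda>u. g (Node u r2)) (Suc b) r1 N"
    unfolding Q_def
  proof (rule sum.mono_neutral_left[OF finite_B])
    show "B (isize r1) \<subseteq> B N" using assms by auto
    show "\<forall>i\<in>B N - B (isize r1). g (Node i r2) * of_nat (?c i) = 0"
    proof
      fix i assume "i \<in> B N - B (isize r1)"
      then have "?c i = 0" using tcoeff_size by fastforce
      then show "g (Node i r2) * of_nat (?c i) = 0" by simp
    qed
  qed
  finally show ?thesis .
qed

lemma sprod_Leaf: "sprod Lc g Leaf = 0"
  using sprod_Q[of Leaf 0 g] by simp

lemma sprod_Node:
  "sprod Lc g (Node r1 r2) = (if descents r1 = 0 then g r2 else 0) + sprod Lc (\<lambda>u. g (Node u r2)) r1"
proof -
  define M where "M = isize r1 + isize r2"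
  have nM: "isize (Node r1 r2) = Suc M" by (simp add: M_def)
  have "sprod Lc g (Node r1 r2) = (\<Sum>a\<in>{Suc 0..Suc M}. Q g a (Node r1 r2) (Suc M))"
    using sprod_Q[of "Node r1 r2" "Suc M" g] nM by simp
  also have "\<dots> = (\<Sum>b\<in>{0..M}. Q g (Suc b) (Node r1 r2) (Suc M))"
    by (rule sum.shift_bounds_cl_Suc_ivl)
  also have "\<dots> = (\<Sum>b\<in>{0..M}. (if r1 = lcomb b then g r2 else 0) + Q (\<lambda>u. g (Node u r2)) (Suc b) r1 (Suc M))"
  proof (rule sum.cong)
    fix b show "Q g (Suc b) (Node r1 r2) (Suc M) = (if r1 = lcomb b then g r2 else 0) + Q (\<lambda>u. g (Node u r2)) (Suc b) r1 (Suc M)"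
      by (rule Q_node) (simp add: M_def)
  qed simp
  also have "\<dots> = (\<Sum>b\<in>{0..M}. (if r1 = lcomb b then g r2 else 0)) + (\<Sum>b\<in>{0..M}. Q (\<lambda>u. g (Node u r2)) (Suc b) r1 (Suc M))"
    by (rule sum.distrib)
  also have "(\<Sum>b\<in>{0..M}. (if r1 = lcomb b then g r2 else 0)) = (if descents r1 = 0 then g r2 else 0)"
  proof (cases "descents r1 = 0")
    case True
    then obtain m where m: "r1 = lcomb m" using lcomb_desc by blast
    then have mM: "m \<in> {0..M}" by (simp add: M_def)
    have "(\<Sum>b\<in>{0..M}. (if r1 = lcomb b then g r2 else 0)) = (\<Sum>b\<in>{0..M}. (if b = m then g r2 else 0))"
    proof (rule sum.cong)
      fix b show "(if r1 = lcomb b then g r2 else 0) = (if b = m then g r2 else 0)"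
        using m lcomb_inj by metis
    qed simp
    also have "\<dots> = g r2" using mM by (simp add: sum.delta)
    finally show ?thesis using True by simp
  next
    case False
    then have "\<And>b. r1 \<noteq> lcomb b" using False lcomb_desc[of r1] by auto
    then show ?thesis using False by simp
  qed
  also have "(\<Sum>b\<in>{0..M}. Q (\<lambda>u. g (Node u r2)) (Suc b) r1 (Suc M)) = (\<Sum>a\<in>{Suc 0..Suc M}. Q (\<lambda>u. g (Node u r2)) a r1 (Suc M))"
    by (rule sum.shift_bounds_cl_Suc_ivl[symmetric])
  also have "\<dots> = sprod Lc (\<lambda>u. g (Node u r2)) r1"
    using sprod_Q[of r1 "Suc M" "\<lambda>u. g (Node u r2)"] by (simp add: M_def)
  finally show ?thesis .
qed


lemma sprod_phi:
  fixes \<phi> :: "nat \<Rightarrow> nat \<Rightarrow> 'a::comm_ring_1"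
  shows "sprod Lc (\<lambda>u. \<phi> (isize u) (descents u)) r =
     (\<Sum>a\<in>{1..tl_len r}. \<phi> (isize r - a) (descents r))
     + (if descents r = 0 then 0 else \<phi> (isize r - tl_len r - 1) (descents r - 1))"
proof (induction r arbitrary: \<phi>)
  case Leaf
  then show ?case by (simp add: sprod_Leaf)
next
  case (Node r1 r2)
  define c where "c = (if r2 = Leaf then 0 else 1::nat)"
  define \<phi>' where "\<phi>' = (\<lambda>x y. \<phi> (Suc (x + isize r2)) (y + descents r2 + c))"
  have eq: "(\<lambda>u. \<phi> (isize (Node u r2)) (descents (Node u r2))) = (\<lambda>u. \<phi>' (isize u) (descents u))"
    by (simp add: \<phi>'_def c_def)
  have S: "sprod Lc (\<lambda>u. \<phi> (isize u) (descents u)) (Node r1 r2) =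
     (if descents r1 = 0 then \<phi> (isize r2) (descents r2) else 0) +
     ((\<Sum>a\<in>{1..tl_len r1}. \<phi>' (isize r1 - a) (descents r1))
     + (if descents r1 = 0 then 0 else \<phi>' (isize r1 - tl_len r1 - 1) (descents r1 - 1)))"
    unfolding sprod_Node eq Node.IH(1) by simp
  show ?case
  proof (cases "descents r1 = 0")
    case True
    note tl1 = tl_comb[OF True]
    show ?thesis
    proof (cases "r2 = Leaf")
      case True
      have "(\<Sum>a\<in>{1..Suc (isize r1)}. \<phi> (Suc (isize r1) - a) 0) =
            (\<Sum>a\<in>{1..isize r1}. \<phi> (Suc (isize r1) - a) 0) + \<phi> 0 0"
        by simp
      moreover have "(\<Sum>a\<in>{1..isize r1}. \<phi> (Suc (isize r1) - a) 0) =
          (\<Sum>a\<in>{1..isize r1}. \<phi>' (isize r1 - a) 0)"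
        by (rule sum.cong) (auto simp: \<phi>'_def c_def True Suc_diff_le)
      ultimately show ?thesis using S \<open>descents r1 = 0\<close> True tl1 by (simp add: add.commute)
    next
      case False
      have "(\<Sum>a\<in>{1..isize r1}. \<phi> (Suc (isize r1 + isize r2) - a) (Suc (descents r2))) =
          (\<Sum>a\<in>{1..isize r1}. \<phi>' (isize r1 - a) 0)"
        by (rule sum.cong) (auto simp: \<phi>'_def c_def False Suc_diff_le)
      then show ?thesis using S \<open>descents r1 = 0\<close> False tl1 by (simp add: add.commute)
    qed
  next
    case False
    have bnd: "descents r1 + tl_len r1 + 1 \<le> isize r1" using tl_noncomb[OF False] .
    have "(\<Sum>a\<in>{1..tl_len r1}. \<phi> (isize (Node r1 r2) - a) (descents (Node r1 r2))) =
          (\<Sum>a\<in>{1..tl_len r1}. \<phi>' (isize r1 - a) (descents r1))"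
      by (rule sum.cong) (use bnd in \<open>auto simp: \<phi>'_def c_def Suc_diff_le\<close>)
    moreover have "\<phi> (isize (Node r1 r2) - tl_len r1 - 1) (descents (Node r1 r2) - 1)
        = \<phi>' (isize r1 - tl_len r1 - 1) (descents r1 - 1)"
    proof -
      have e1: "isize r1 - tl_len r1 = Suc (isize r1 - Suc (tl_len r1))" using bnd by arith
      have e2: "isize r1 + isize r2 - tl_len r1 = Suc (isize r1 + isize r2 - Suc (tl_len r1))" using bnd by arith
      show ?thesis using bnd False e1 e2 by (simp add: \<phi>'_def c_def)
    qed
    ultimately show ?thesis using S False by simp
  qed
qed


fun gam :: "nat \<Rightarrow> nat \<Rightarrow> nat \<Rightarrow> nat" where
  "gam 0 n d = (if n = 0 then 1 else 0)"
| "gam (Suc j) n d = (if 0 < n \<and> d \<le> j then (n - 1 - d) choose (j - d) else 0)"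

lemma hockey:
  "l \<le> N \<Longrightarrow> (\<Sum>a\<in>{1..l}. (N - a) choose K) + ((N - l) choose (Suc K)) = N choose (Suc K)"
proof (induction l)
  case 0 then show ?case by simp
next
  case (Suc l)
  have e: "N - l = Suc (N - Suc l)" using Suc.prems by arith
  have "(\<Sum>a\<in>{1..Suc l}. (N - a) choose K) + ((N - Suc l) choose (Suc K))
     = (\<Sum>a\<in>{1..l}. (N - a) choose K) + (((N - Suc l) choose K) + ((N - Suc l) choose (Suc K)))"
    by simp
  also have "\<dots> = (\<Sum>a\<in>{1..l}. (N - a) choose K) + ((N - l) choose (Suc K))"
    by (simp add: e)
  also have "\<dots> = N choose (Suc K)" using Suc by simp
  finally show ?case .
qed

lemma gam_step:
  assumes h1: "d = 0 \<Longrightarrow> l = n" and h2: "d \<noteq> 0 \<Longrightarrow> d + l + 1 \<le> n"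
  shows "(\<Sum>a\<in>{1..l}. gam k (n - a) d) + (if d = 0 then 0 else gam k (n - l - 1) (d - 1)) = gam (Suc k) n d"
proof (cases k)
  case 0
  show ?thesis
  proof (cases "d = 0")
    case True
    then have l: "l = n" using h1 by simp
    have "(\<Sum>a\<in>{1..n}. gam 0 (n - a) d) = (\<Sum>a\<in>{1..n}. if a = n then 1 else 0)"
      by (rule sum.cong) auto
    also have "\<dots> = (if 0 < n then 1 else 0)" by simp
    finally show ?thesis using 0 True l by simp
  next
    case False
    then have b: "d + l + 1 \<le> n" using h2 by simp
    have "(\<Sum>a\<in>{1..l}. gam 0 (n - a) d) = 0"
      by (rule sum.neutral) (use b in auto)
    then show ?thesis using 0 False b by simp
  qed
next
  case (Suc j)
  show ?thesis
  proof (cases "d = 0")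
    case True
    then have l: "l = n" using h1 by simp
    show ?thesis
    proof (cases n)
      case 0 then show ?thesis using l Suc by simp
    next
      case (Suc N)
      have "(\<Sum>a\<in>{1..Suc N}. gam (Suc j) (Suc N - a) 0) = (\<Sum>a\<in>{1..N}. gam (Suc j) (Suc N - a) 0)"
        by simp
      also have "\<dots> = (\<Sum>a\<in>{1..N}. (N - a) choose j)"
        by (rule sum.cong) auto
      also have "\<dots> = N choose (Suc j)" using hockey[of N N j] by simp
      finally show ?thesis using Suc \<open>k = Suc j\<close> True l by simp
    qed
  next
    case False
    then have b: "d + l + 1 \<le> n" using h2 by simp
    show ?thesis
    proof (cases "d \<le> j")
      case True
      have "(\<Sum>a\<in>{1..l}. gam (Suc j) (n - a) d) = (\<Sum>a\<in>{1..l}. (n - 1 - d - a) choose (j - d))"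
        by (rule sum.cong) (use b True in \<open>auto simp: algebra_simps\<close>)
      moreover have "gam (Suc j) (n - l - 1) (d - 1) = (n - 1 - d - l) choose (Suc (j - d))"
      proof -
        have "n - l - 1 - 1 - (d - 1) = n - 1 - d - l" using b False by arith
        moreover have "j - (d - 1) = Suc (j - d)" using True False by arith
        moreover have "0 < n - l - 1" "d - 1 \<le> j" using b True False by arith+
        ultimately show ?thesis by simp
      qed
      moreover have "(\<Sum>a\<in>{1..l}. (n - 1 - d - a) choose (j - d)) + ((n - 1 - d - l) choose (Suc (j - d)))
          = (n - 1 - d) choose (Suc (j - d))"
        using hockey[of l "n - 1 - d" "j - d"] b by simp
      ultimately show ?thesis using Suc False True b by (simp add: Suc_diff_le ac_simps)
    next
      case nle: False
      have "(\<Sum>a\<in>{1..l}. gam (Suc j) (n - a) d) = 0"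
        by (rule sum.neutral) (use nle in auto)
      then show ?thesis using Suc False nle b by auto
    qed
  qed
qed

lemma L_eq: "(\<lambda>t. Xcombs t - sunit t) = (Lc :: ptree \<Rightarrow> 'a::comm_ring_1)"
proof
  fix t
  show "Xcombs t - sunit t = (Lc t :: 'a)"
    unfolding Xcombs_def sunit_def Lc_def using lcomb_desc[of t] by auto
qed

lemma spow_formula: "spow (Lc :: ptree \<Rightarrow> 'a::comm_ring_1) k r = of_nat (gam k (isize r) (descents r))"
proof (induction k arbitrary: r)
  case 0
  then show ?case by (simp add: sunit_def) (metis isize.elims nat.distinct(1))
next
  case (Suc k)
  have "spow (Lc :: ptree \<Rightarrow> 'a) (Suc k) r = sprod Lc (\<lambda>u. of_nat (gam k (isize u) (descents u))) r"
  proof -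
    have "spow (Lc :: ptree \<Rightarrow> 'a) k = (\<lambda>u. of_nat (gam k (isize u) (descents u)))"
      by (rule ext) (rule Suc.IH)
    then show ?thesis by simp
  qed
  also have "\<dots> = of_nat ((\<Sum>a\<in>{1..tl_len r}. gam k (isize r - a) (descents r))
     + (if descents r = 0 then 0 else gam k (isize r - tl_len r - 1) (descents r - 1)))"
    using sprod_phi[of "\<lambda>x y. (of_nat (gam k x y) :: 'a)" r] by simp
  also have "\<dots> = of_nat (gam (Suc k) (isize r) (descents r))"
    using gam_step[of "descents r" "tl_len r" "isize r" k] tl_comb tl_noncomb by simp
  finally show ?case .
qed


definition S :: "nat \<Rightarrow> nat \<Rightarrow> 'a::field_char_0" where
  "S N d = (\<Sum>i\<le>N. (-1)^i * of_nat (N choose i) / of_nat (i + d + 1))"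

lemma field_aux: "(A::'a::field) \<noteq> 0 \<Longrightarrow> x \<noteq> 0 \<Longrightarrow> a * x - b = c \<Longrightarrow> a / A - b / (x * A) = c / (x * A)"
  by (simp add: field_simps)

lemma fact_ident:
  "(fact d * fact N / fact (N + d + 1) :: 'a::field_char_0) - fact (Suc d) * fact N / fact (N + Suc d + 1)
   = fact d * fact (Suc N) / fact (Suc N + d + 1)"
proof -
  have e: "N + Suc d + 1 = Suc (N + d + 1)" "Suc N + d + 1 = Suc (N + d + 1)" "N + d + 2 = Suc (N + d + 1)"
    by simp_all
  have f1: "(fact (N + Suc d + 1) :: 'a) = of_nat (N + d + 2) * fact (N + d + 1)"
    unfolding e by (rule fact_Suc)
  have f2: "(fact (Suc N + d + 1) :: 'a) = of_nat (N + d + 2) * fact (N + d + 1)"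
    unfolding e by (rule fact_Suc)
  have nz: "(fact (N + d + 1) :: 'a) \<noteq> 0" by (rule fact_nonzero)
  have nz2: "(of_nat (N + d + 2) :: 'a) \<noteq> 0"
  proof -
    have "N + d + 2 \<noteq> 0" by simp
    then show ?thesis by (metis of_nat_eq_0_iff)
  qed
  have fs: "(fact (Suc d) :: 'a) = of_nat (Suc d) * fact d" "(fact (Suc N) :: 'a) = of_nat (Suc N) * fact N"
    by (simp_all add: fact_Suc)
  have ar: "(fact d * fact N) * (of_nat (N + d + 2) :: 'a) - fact (Suc d) * fact N = fact d * fact (Suc N)"
  proof -
    have "(of_nat (N + d + 2) :: 'a) = of_nat (Suc N) + of_nat (Suc d)" by simp
    then show ?thesis unfolding fs by (simp add: algebra_simps)
  qed
  show ?thesis unfolding f1 f2 by (rule field_aux[OF nz nz2 ar])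
qed

lemma neg_aux: "(- p) * (a + b) / (D::'a::field) = -(p * a / D) + (- p) * b / D"
  by (simp only: distrib_left add_divide_distrib mult_minus_left minus_divide_left)

lemma S_closed: "S N d = (fact d * fact N / fact (N + d + 1) :: 'a::field_char_0)"
proof (induction N arbitrary: d)
  case 0
  have s0: "S 0 d = (1::'a) / of_nat (d + 1)" by (simp add: S_def)
  have f: "(fact (0 + d + 1) :: 'a) = of_nat (d + 1) * fact d" by (simp only: add_0 Suc_eq_plus1[symmetric] fact_Suc)
  have nz: "(fact d :: 'a) \<noteq> 0" by (rule fact_nonzero)
  have "(fact d * fact 0 / fact (0 + d + 1) :: 'a) = 1 / of_nat (d + 1)"
    unfolding f using nz by simp
  then show ?case using s0 by simp
next
  case (Suc N)
  define f where "f = (\<lambda>i. (-1)^i * of_nat (N choose i) / of_nat (i + d + 1) :: 'a)"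
  define A where "A = (\<Sum>i\<le>N. (-1)^i * of_nat (N choose i) / of_nat (i + Suc d + 1) :: 'a)"
  have A: "A = S N (Suc d)" by (simp add: A_def S_def)
  have T: "(\<Sum>i\<le>N. f (Suc i)) = S N d - 1 / of_nat (d + 1)"
  proof -
    have "(\<Sum>i\<le>Suc N. f i) = S N d" by (simp add: f_def S_def)
    moreover have "(\<Sum>i\<le>Suc N. f i) = f 0 + (\<Sum>i\<le>N. f (Suc i))" by (rule sum.atMost_Suc_shift)
    ultimately show ?thesis by (simp add: f_def)
  qed
  have "S (Suc N) d = (1::'a) / of_nat (d + 1) +
      (\<Sum>i\<le>N. (-1)^(Suc i) * of_nat (Suc N choose Suc i) / of_nat (Suc i + d + 1))"
    unfolding S_def by (subst sum.atMost_Suc_shift) simp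
  also have "(\<Sum>i\<le>N. (-1)^(Suc i) * of_nat (Suc N choose Suc i) / of_nat (Suc i + d + 1) :: 'a)
      = (\<Sum>i\<le>N. - ((-1)^i * of_nat (N choose i) / of_nat (i + Suc d + 1)) + f (Suc i))"
  proof (rule sum.cong)
    fix i
    have cs: "(of_nat (Suc N choose Suc i) :: 'a) = of_nat (N choose i) + of_nat (N choose Suc i)" by simp
    show "(-1)^(Suc i) * of_nat (Suc N choose Suc i) / of_nat (Suc i + d + 1) =
        - ((-1)^i * of_nat (N choose i) / of_nat (i + Suc d + 1)) + (f (Suc i) :: 'a)"
    proof -
      have e: "i + Suc d + 1 = Suc i + d + 1" by simp
      have p: "(-1::'a)^(Suc i) = - ((-1)^i)" by simp
      show ?thesis unfolding f_def e p cs by (rule neg_aux)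
    qed
  qed simp
  also have "\<dots> = - A + (\<Sum>i\<le>N. f (Suc i))"
    unfolding A_def by (simp only: sum.distrib sum_negf)
  finally have "S (Suc N) d = 1 / of_nat (d + 1) + (- A + (S N d - 1 / of_nat (d + 1)))"
    unfolding T .
  then have "S (Suc N) d = S N d - (S N (Suc d) :: 'a)" unfolding A by simp
  also have "\<dots> = fact d * fact N / fact (N + d + 1) - fact (Suc d) * fact N / fact (N + Suc d + 1)"
    by (simp only: Suc.IH)
  also have "\<dots> = fact d * fact (Suc N) / fact (Suc N + d + 1)"
    by (rule fact_ident)
  finally show ?case .
qed


lemma main_coeff:
  fixes m d :: nat
  assumes dm: "d \<le> m"
  shows "(\<Sum>k\<in>{1..Suc m}. (-1) ^ (k + 1) / of_nat k * (of_nat (gam k (Suc m) d) :: 'a::field_char_0))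
       = 1 / of_nat (Suc m) * ((-1) ^ d / of_nat (m choose d))"
proof -
  define N where "N = m - d"
  have mN: "m = N + d" using dm N_def by simp
  let ?g = "\<lambda>k. (-1) ^ (k + 1) / of_nat k * (of_nat (gam k (Suc m) d) :: 'a)"
  have "(\<Sum>k\<in>{1..Suc m}. ?g k) = (\<Sum>j\<in>{0..m}. ?g (Suc j))"
    using sum.shift_bounds_cl_Suc_ivl[of ?g 0 m] by simp
  also have "\<dots> = (\<Sum>j\<in>{d..m}. ?g (Suc j))"
    by (rule sum.mono_neutral_right) (auto)
  also have "\<dots> = (\<Sum>i\<in>{0..N}. ?g (Suc (i + d)))"
    using sum.shift_bounds_cl_nat_ivl[of "\<lambda>j. ?g (Suc j)" 0 d N] mN by simp
  also have "\<dots> = (\<Sum>i\<in>{0..N}. (-1)^d * ((-1)^i * of_nat (N choose i) / of_nat (i + d + 1)))"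
  proof (rule sum.cong)
    fix i assume "i \<in> {0..N}"
    have "gam (Suc (i + d)) (Suc m) d = N choose i" using mN by simp
    then show "?g (Suc (i + d)) = (-1)^d * ((-1)^i * of_nat (N choose i) / of_nat (i + d + 1))"
      by (simp add: power_add field_simps)
  qed simp
  also have "\<dots> = (-1)^d * S N d"
    by (simp add: S_def sum_distrib_left atLeast0AtMost)
  also have "\<dots> = (-1)^d * (fact d * fact N / fact (N + d + 1))"
    by (simp add: S_closed)
  also have "\<dots> = 1 / of_nat (Suc m) * ((-1) ^ d / of_nat (m choose d))"
  proof -
    have b: "(of_nat (m choose d) :: 'a) = fact m / (fact d * fact N)"
      using binomial_fact[OF dm] N_def by simp
    have f: "(fact (N + d + 1) :: 'a) = of_nat (Suc m) * fact m" using mN by (simp add: fact_Suc)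
    show ?thesis unfolding b f by (simp add: field_simps)
  qed
  finally show ?thesis .
qed

theorem corollary4p4:
  shows "slog (Xcombs :: ptree \<Rightarrow> 'a::field_char_0) =
    (\<lambda>t. if isize t = 0 then 0
         else (1 / of_nat (isize t)) *
              ((-1) ^ descents t / of_nat (isize t - 1 choose descents t)))"
proof
  fix t
  have s: "slog (Xcombs :: ptree \<Rightarrow> 'a) t =
     (\<Sum>k\<in>{1..isize t}. (-1) ^ (k + 1) / of_nat k * (of_nat (gam k (isize t) (descents t)) :: 'a))"
    unfolding slog_def Let_def L_eq spow_formula ..
  show "slog (Xcombs :: ptree \<Rightarrow> 'a) t = (if isize t = 0 then 0
         else (1 / of_nat (isize t)) *
              ((-1) ^ descents t / of_nat (isize t - 1 choose descents t)))"
  proof (cases "isize t")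
    case 0 then show ?thesis using s by simp
  next
    case (Suc m)
    then have "t \<noteq> Leaf" by auto
    then have "descents t \<le> m" using desc_le[of t] Suc by simp
    then show ?thesis using s Suc main_coeff[of "descents t" m] by simp
  qed
qed

end
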